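(* Let $V$ be a real vector space of dimension $d$, and $G$ a group of affine-linear transformations of $V$ including all translations. Then for all $i,j\in\{0,\ldots,d\}$, $\lambda\in[0,\infty)$ and $x\in\mathcal{CB}(V,G)$, \[e_i(\rho_j(\lambda,x))=\rho_i(\lambda,e_j(x))=\begin{cases}\rho_i(\lambda,x)&\text{if }i=j,\\0&\text{if }i\neq j.\end{cases}\] In particular, $\rho_i$ takes values in $\mathcal{CB}_i(V,G)$.
   Context: $\mathcal{K}(V)$ is the set of nonempty compact convex subsets of $V$ with the Hausdorff metric topology. $\mathcal{CB}(V,G)$ is the quotient (with quotient topology) of the free Hausdorff topological abelian group $\mathbb{Z}\mathcal{K}(V)$ on $\mathcal{K}(V)$ (the Hausdorff topological abelian group with continuous map $X\mapsto[X]$ through which every continuous map from $\mathcal{K}(V)$ to a Hausdorff topological abelian group factors uniquely via a continuous homomorphism) by the closure of the subgroup generated by all $[B\cup C]-[B]-[C]+[B\cap C]$ ($B,C,B\cup C\in\mathcal{K}(V)$) and all $[X]-[gX]$ ($g\in G$); images are still written $[X]$. The dilation map $D$ is the unique continuous map $[0,\infty)\times\mathcal{CB}(V,G)\to\mathcal{CB}(V,G)$, homomorphism in its second variable, with $D(\lambda,[X])=[\lambda X]$. The dilation components are the uniquely determined continuous maps $\rho_0\colon\mathcal{CB}(V,G)\to\mathcal{CB}(V,G)$ and $\rho_1,\ldots,\rho_d\colon[0,\infty)\times\mathcal{CB}(V,G)\to\mathcal{CB}(V,G)$ with each $\rho_i(-,x)$ ($i\geqslant1$) a semigroup homomorphism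 on $([0,\infty),+)$ and $D(\lambda,x)=\rho_0(x)+\sum_{i=1}^d\rho_i(\lambda^i,x)$; by convention $\rho_0(\lambda,x)$ means $\rho_0(x)$. The idempotents are $e_0=\rho_0$, $e_i(x)=\rho_i(1,x)$ ($i\geqslant1$), and $\mathcal{CB}_i(V,G)=e_i(\mathcal{CB}(V,G))$. *)

theory Defs
  imports "HOL-Analysis.Analysis" "HOL-Library.Poly_Mapping"
    "HOL-Algebra.Coset" "HOL-Algebra.Generated_Groups" "HOL-Algebra.FiniteProduct"
begin

definition hausdist :: "'v::real_normed_vector set \<Rightarrow> 'v set \<Rightarrow> real" where
  "hausdist X Y = max (SUP x\<in>X. infdist x Y) (SUP y\<in>Y. infdist y X)"

definition Kc :: "'v::euclidean_space set set" where
  "Kc = {X. X \<noteq> {} \<and> compact X \<and> convex X}"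

definition Ktop :: "'v::euclidean_space set topology" where
  "Ktop = Metric_space.mtopology Kc hausdist"

definition ZK :: "('v::euclidean_space set \<Rightarrow>\<^sub>0 int) monoid" where
  "ZK = \<lparr>carrier = {p. Poly_Mapping.keys p \<subseteq> Kc}, mult = (+), one = 0\<rparr>"

definition gen :: "'v set \<Rightarrow> ('v set \<Rightarrow>\<^sub>0 int)" where
  "gen X = Poly_Mapping.single X 1"

definition group_topology :: "'a::ab_group_add set \<Rightarrow> 'a topology \<Rightarrow> bool" where
  "group_topology S T \<longleftrightarrow> topspace T = S
     \<and> continuous_map (prod_topology T T) T (\<lambda>(a, b). a + b)
     \<and> continuous_map T T uminus"

text \<open>The free Hausdorff topology: the supremum of all Hausdorff group topologies on the free
  abelian group for which the generator map is continuous.\<close>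
definition ZKtop :: "('v::euclidean_space set \<Rightarrow>\<^sub>0 int) topology" where
  "ZKtop = topology_generated_by (insert (carrier ZK)
      (\<Union>{{U. openin T U} | T. group_topology (carrier ZK) T \<and> Hausdorff_space T
                                \<and> continuous_map Ktop T gen}))"

definition CBrel :: "('v::euclidean_space \<Rightarrow> 'v) set \<Rightarrow> ('v set \<Rightarrow>\<^sub>0 int) set" where
  "CBrel G = {gen (B \<union> C) - gen B - gen C + gen (B \<inter> C) | B C. B \<in> Kc \<and> C \<in> Kc \<and> B \<union> C \<in> Kc}
           \<union> {gen X - gen (g ` X) | X g. X \<in> Kc \<and> g \<in> G}"

definition CBker :: "('v::euclidean_space \<Rightarrow> 'v) set \<Rightarrow> ('v set \<Rightarrow>\<^sub>0 int) set" where
  "CBker G = ZKtop closure_of (generate ZK (CBrel G))"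

definition CB :: "('v::euclidean_space \<Rightarrow> 'v) set \<Rightarrow> ('v set \<Rightarrow>\<^sub>0 int) set monoid" where
  "CB G = ZK Mod CBker G"

definition cls :: "('v::euclidean_space \<Rightarrow> 'v) set \<Rightarrow> 'v set \<Rightarrow> ('v set \<Rightarrow>\<^sub>0 int) set" where
  "cls G X = CBker G #>\<^bsub>ZK\<^esub> gen X"

definition CBtop :: "('v::euclidean_space \<Rightarrow> 'v) set \<Rightarrow> ('v set \<Rightarrow>\<^sub>0 int) set topology" where
  "CBtop G = topology (\<lambda>U. U \<subseteq> carrier (CB G)
       \<and> openin ZKtop {p \<in> carrier ZK. CBker G #>\<^bsub>ZK\<^esub> p \<in> U})"

definition affine_group :: "('v::real_vector \<Rightarrow> 'v) set \<Rightarrow> bool" where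
  "affine_group G \<longleftrightarrow>
     (\<forall>g\<in>G. \<exists>f b. linear f \<and> bij f \<and> g = (\<lambda>x. f x + b))
     \<and> id \<in> G \<and> (\<forall>g\<in>G. \<forall>h\<in>G. g \<circ> h \<in> G) \<and> (\<forall>g\<in>G. \<exists>h\<in>G. g \<circ> h = id \<and> h \<circ> g = id)
     \<and> (\<forall>b. (\<lambda>x. x + b) \<in> G)"

definition is_dilation :: "('v::euclidean_space \<Rightarrow> 'v) set
    \<Rightarrow> (real \<Rightarrow> ('v set \<Rightarrow>\<^sub>0 int) set \<Rightarrow> ('v set \<Rightarrow>\<^sub>0 int) set) \<Rightarrow> bool" where
  "is_dilation G D \<longleftrightarrow>
     continuous_map (prod_topology (top_of_set {0..}) (CBtop G)) (CBtop G) (\<lambda>(l, x). D l x)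
     \<and> (\<forall>l\<ge>0. D l \<in> hom (CB G) (CB G))
     \<and> (\<forall>l\<ge>0. \<forall>X\<in>Kc. D l (cls G X) = cls G ((\<lambda>v. l *\<^sub>R v) ` X))"

definition dilation_components :: "('v::euclidean_space \<Rightarrow> 'v) set
    \<Rightarrow> (real \<Rightarrow> ('v set \<Rightarrow>\<^sub>0 int) set \<Rightarrow> ('v set \<Rightarrow>\<^sub>0 int) set)
    \<Rightarrow> (('v set \<Rightarrow>\<^sub>0 int) set \<Rightarrow> ('v set \<Rightarrow>\<^sub>0 int) set)
    \<Rightarrow> (nat \<Rightarrow> real \<Rightarrow> ('v set \<Rightarrow>\<^sub>0 int) set \<Rightarrow> ('v set \<Rightarrow>\<^sub>0 int) set) \<Rightarrow> bool" where
  "dilation_components G D rho0 rho \<longleftrightarrow>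
     continuous_map (CBtop G) (CBtop G) rho0
     \<and> (\<forall>i\<in>{1..DIM('v)}.
          continuous_map (prod_topology (top_of_set {0..}) (CBtop G)) (CBtop G) (\<lambda>(l, x). rho i l x)
          \<and> (\<forall>s\<ge>0. \<forall>t\<ge>0. \<forall>x\<in>carrier (CB G). rho i (s + t) x = rho i s x \<otimes>\<^bsub>CB G\<^esub> rho i t x))
     \<and> (\<forall>l\<ge>0. \<forall>x\<in>carrier (CB G).
          D l x = rho0 x \<otimes>\<^bsub>CB G\<^esub> finprod (CB G) (\<lambda>i. rho i (l ^ i) x) {1..DIM('v)})"

text \<open>Convention: rho_0(lambda, x) means rho_0(x).\<close>
definition rhoE :: "('a \<Rightarrow> 'a) \<Rightarrow> (nat \<Rightarrow> real \<Rightarrow> 'a \<Rightarrow> 'a) \<Rightarrow> nat \<Rightarrow> real \<Rightarrow> 'a \<Rightarrow> 'a" where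
  "rhoE rho0 rho i l x = (if i = 0 then rho0 x else rho i l x)"

text \<open>Idempotents: e_0 = rho_0, e_i(x) = rho_i(1, x).\<close>
definition idem :: "('a \<Rightarrow> 'a) \<Rightarrow> (nat \<Rightarrow> real \<Rightarrow> 'a \<Rightarrow> 'a) \<Rightarrow> nat \<Rightarrow> 'a \<Rightarrow> 'a" where
  "idem rho0 rho i x = rhoE rho0 rho i 1 x"

end

theory Submission
  imports Defs
begin

definition shom :: "('a, 'b) monoid_scheme \<Rightarrow> (real \<Rightarrow> 'a) \<Rightarrow> bool" where
  "shom G f \<longleftrightarrow> (\<forall>t\<ge>0. f t \<in> carrier G) \<and> (\<forall>s\<ge>0. \<forall>t\<ge>0. f (s + t) = f s \<otimes>\<^bsub>G\<^esub> f t)"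

context comm_group begin

lemma div_one_eq: assumes "a \<in> carrier G" "b \<in> carrier G" "a \<otimes> inv b = \<one>" shows "a = b"
proof -
  have "a = (a \<otimes> inv b) \<otimes> b" using assms(1,2) by (simp add: m_assoc)
  also have "\<dots> = \<one> \<otimes> b" by (simp only: assms(3))
  finally show ?thesis using assms by simp
qed

lemma shom_closed: "shom G f \<Longrightarrow> t \<ge> 0 \<Longrightarrow> f t \<in> carrier G"
  by (simp add: shom_def)

lemma shom_add: "shom G f \<Longrightarrow> s \<ge> 0 \<Longrightarrow> t \<ge> 0 \<Longrightarrow> f (s + t) = f s \<otimes> f t"
  by (simp add: shom_def)

lemma shom_zero: assumes "shom G f" shows "f 0 = \<one>"
proof -
  have "f 0 = f 0 \<otimes> f 0" using shom_add[OF assms, of 0 0] by simp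
  thus ?thesis using shom_closed[OF assms, of 0] by simp
qed

lemma shom_nat: assumes "shom G f" "t \<ge> 0" shows "f (of_nat m * t) = f t [^] m"
proof (induction m)
  case 0 then show ?case using shom_zero[OF assms(1)] by simp
next
  case (Suc m)
  have "f (of_nat (Suc m) * t) = f (of_nat m * t + t)" by (simp add: algebra_simps)
  also have "\<dots> = f (of_nat m * t) \<otimes> f t" using assms by (intro shom_add) auto
  finally show ?case using Suc by simp
qed

lemma finprod_pow: assumes "f \<in> A \<rightarrow> carrier G"
  shows "finprod G (\<lambda>j. f j [^] (m::nat)) A = finprod G f A [^] m"
proof (induction m)
  case 0 then show ?case by simp
next
  case (Suc m)
  have "finprod G (\<lambda>j. f j [^] Suc m) A = finprod G (\<lambda>j. f j [^] m \<otimes> f j) A" by simp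
  also have "\<dots> = finprod G (\<lambda>j. f j [^] m) A \<otimes> finprod G f A"
    using assms by (intro finprod_multf) auto
  finally show ?case using Suc by simp
qed

lemma finprod_inv: assumes "f \<in> A \<rightarrow> carrier G"
  shows "finprod G (\<lambda>j. inv f j) A = inv finprod G f A"
proof (cases "finite A")
  case True then show ?thesis using assms
  proof (induction A rule: finite_induct)
    case (insert a A)
    then show ?case by (simp add: inv_mult Pi_def)
  qed simp
qed simp

lemma shom_vanish:
  "(\<forall>j\<in>{1..n}. shom G (chi j)) \<Longrightarrow> (\<forall>l\<ge>0. finprod G (\<lambda>j. chi j (l ^ j)) {1..n} = \<one>)
   \<Longrightarrow> \<forall>j\<in>{1..n}. \<forall>t\<ge>0. chi j t = \<one>"
proof (induction n arbitrary: chi)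
  case 0 then show ?case by simp
next
  case (Suc n)
  define N where "N = Suc n"
  have hom: "\<And>j. j \<in> {1..N} \<Longrightarrow> shom G (chi j)" using Suc.prems(1) N_def by auto
  have cl: "\<And>j t. j \<in> {1..N} \<Longrightarrow> t \<ge> 0 \<Longrightarrow> chi j t \<in> carrier G"
    using hom shom_closed by blast
  have ins: "{1..N} = insert N {1..n}" using N_def by auto
  define chi' where "chi' j t = chi j (2^j * t) \<otimes> inv chi j (2^N * t)" for j t
  have hom': "shom G (chi' j)" if "j \<in> {1..n}" for j
    unfolding shom_def
  proof (intro conjI allI impI)
    fix t :: real assume "t \<ge> 0" then show "chi' j t \<in> carrier G"
      using that cl N_def unfolding chi'_def by auto
  next
    fix s t :: real assume st: "s \<ge> 0" "t \<ge> 0"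
    have jN: "j \<in> {1..N}" using that N_def by auto
    have "chi' j (s + t) = (chi j (2^j * s) \<otimes> chi j (2^j * t)) \<otimes> inv (chi j (2^N * s) \<otimes> chi j (2^N * t))"
      unfolding chi'_def using st hom[OF jN]
      by (simp add: distrib_left shom_add)
    also have "\<dots> = chi' j s \<otimes> chi' j t"
      unfolding chi'_def using st cl[OF jN] by (simp add: inv_mult m_ac)
    finally show "chi' j (s + t) = chi' j s \<otimes> chi' j t" .
  qed
  have prod1: "finprod G (\<lambda>j. chi' j (l ^ j)) {1..n} = \<one>" if l: "l \<ge> 0" for l
  proof -
    have f1: "(\<lambda>j. chi j (2^j * l ^ j)) \<in> {1..N} \<rightarrow> carrier G" using cl l by auto
    have f2: "(\<lambda>j. chi j (l ^ j)) \<in> {1..N} \<rightarrow> carrier G" using cl l by auto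
    have f3: "(\<lambda>j. inv chi j (2^N * l ^ j)) \<in> {1..N} \<rightarrow> carrier G" using cl l by auto
    have A: "finprod G (\<lambda>j. chi j (2^j * l ^ j)) {1..N} = \<one>"
      using Suc.prems(2)[rule_format, of "2 * l"] l N_def by (simp add: power_mult_distrib)
    have "finprod G (\<lambda>j. chi j (2^N * l ^ j)) {1..N} = finprod G (\<lambda>j. chi j (l ^ j) [^] (2::nat)^N) {1..N}"
      using hom l cl by (intro finprod_cong') (auto simp: shom_nat[symmetric])
    also have "\<dots> = \<one>" using finprod_pow[OF f2] Suc.prems(2) l N_def by simp
    finally have B: "finprod G (\<lambda>j. chi j (2^N * l ^ j)) {1..N} = \<one>" .
    have "finprod G (\<lambda>j. chi' j (l ^ j)) {1..N} = \<one>"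
      unfolding chi'_def using finprod_multf[OF f1 f3] finprod_inv[of "\<lambda>j. chi j (2^N * l ^ j)" "{1..N}"] cl l A B
      by (auto simp: Pi_def)
    moreover have "chi' N (l ^ N) = \<one>" unfolding chi'_def using cl[of N "2^N * l^N"] l N_def by simp
    moreover have "(\<lambda>j. chi' j (l ^ j)) \<in> {1..n} \<rightarrow> carrier G"
      using hom' shom_closed l by auto
    ultimately show ?thesis using ins N_def by simp
  qed
  have low: "chi j t = \<one>" if j: "j \<in> {1..n}" and t: "t \<ge> 0" for j t
  proof -
    have jN: "j \<in> {1..N}" using j N_def by auto
    have jl: "j < N" using j N_def by auto
    have c: "(2::real)^j < 2^N" using jl by simp
    define u where "u = t / (2^N - 2^j)"
    have u: "u \<ge> 0" using t c u_def by simp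
    have e: "2^N * u = 2^j * u + t" using c unfolding u_def by (simp add: field_simps)
    have "chi' j u = \<one>" using Suc.IH[of chi'] hom' prod1 j u by blast
    moreover have a1: "chi j (2^j * u) \<in> carrier G" using u by (intro cl[OF jN]) simp
    moreover have a2: "chi j (2^N * u) \<in> carrier G" using u by (intro cl[OF jN]) simp
    ultimately have "chi j (2^j * u) = chi j (2^N * u)"
      unfolding chi'_def by (rule div_one_eq[rotated 2])
    then have "chi j (2^j * u) = chi j (2^j * u) \<otimes> chi j t"
      using e shom_add[OF hom[OF jN], of "2^j * u" t] u t by simp
    then show ?thesis using cl[OF jN] u t by simp
  qed
  have top: "chi N t = \<one>" if t: "t \<ge> 0" for t
  proof -
    define l where "l = root N t"
    have N0: "0 < N" using N_def by simp
    have l: "l \<ge> 0" "l ^ N = t" using t unfolding l_def by (simp_all add: real_root_pow_pos2[OF N0 t] real_root_ge_zero)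
    have "finprod G (\<lambda>j. chi j (l ^ j)) {1..n} = finprod G (\<lambda>j. \<one>) {1..n}"
      using low l cl by (intro finprod_cong') (auto simp: Pi_def)
    then have p1: "finprod G (\<lambda>j. chi j (l ^ j)) {1..n} = \<one>" by simp
    have fc: "(\<lambda>j. chi j (l ^ j)) \<in> {1..n} \<rightarrow> carrier G" using cl l N_def by auto
    have ct: "chi N t \<in> carrier G" using cl t N_def by auto
    have "finprod G (\<lambda>j. chi j (l ^ j)) {1..N} = chi N (l ^ N) \<otimes> finprod G (\<lambda>j. chi j (l ^ j)) {1..n}"
      unfolding ins by (rule finprod_insert) (use fc ct l N_def in auto)
    then have "finprod G (\<lambda>j. chi j (l ^ j)) {1..N} = chi N t"
      using p1 ct l by simp
    then show ?thesis using Suc.prems(2) l N_def by simp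
  qed
  show ?case using low top N_def by (metis atLeastAtMost_iff le_Suc_eq)
qed


lemma uniq:
  assumes c: "c \<in> carrier G" "c' \<in> carrier G"
    and h: "\<forall>j\<in>{1..n}. shom G (psi j)" "\<forall>j\<in>{1..n}. shom G (phi j)"
    and e: "\<forall>l\<ge>0. c \<otimes> finprod G (\<lambda>j. psi j (l ^ j)) {1..n} = c' \<otimes> finprod G (\<lambda>j. phi j (l ^ j)) {1..n}"
  shows "c = c' \<and> (\<forall>j\<in>{1..n}. \<forall>t\<ge>0. psi j t = phi j t)"
proof -
  have z1: "finprod G (\<lambda>j. psi j (0 ^ j)) {1..n} = \<one>"
  proof (rule finprod_one_eqI)
    fix j assume "j \<in> {1..n}"
    then have z: "0 ^ j = (0::real)" and hj: "shom G (psi j)" using h by auto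
    show "psi j (0 ^ j) = \<one>" unfolding z by (rule shom_zero[OF hj])
  qed
  have z2: "finprod G (\<lambda>j. phi j (0 ^ j)) {1..n} = \<one>"
  proof (rule finprod_one_eqI)
    fix j assume "j \<in> {1..n}"
    then have z: "0 ^ j = (0::real)" and hj: "shom G (phi j)" using h by auto
    show "phi j (0 ^ j) = \<one>" unfolding z by (rule shom_zero[OF hj])
  qed
  have cc: "c = c'" using e[rule_format, of 0] z1 z2 c by simp
  define chi where "chi j t = psi j t \<otimes> inv phi j t" for j t
  have hc: "shom G (chi j)" if "j \<in> {1..n}" for j
    unfolding shom_def chi_def using h that
    by (auto simp: shom_closed shom_add inv_mult m_ac)
  have "finprod G (\<lambda>j. chi j (l ^ j)) {1..n} = \<one>" if l: "l \<ge> 0" for l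
  proof -
    have f1: "(\<lambda>j. psi j (l ^ j)) \<in> {1..n} \<rightarrow> carrier G" using h l shom_closed by auto
    have f2: "(\<lambda>j. phi j (l ^ j)) \<in> {1..n} \<rightarrow> carrier G" using h l shom_closed by auto
    have f3: "(\<lambda>j. inv phi j (l ^ j)) \<in> {1..n} \<rightarrow> carrier G" using f2 by auto
    have eq: "finprod G (\<lambda>j. psi j (l ^ j)) {1..n} = finprod G (\<lambda>j. phi j (l ^ j)) {1..n}"
      using e[rule_format, OF l] cc c f1 f2 by simp
    show ?thesis unfolding chi_def using finprod_multf[OF f1 f3] finprod_inv[OF f2] eq f2
      by simp
  qed
  then have "\<forall>j\<in>{1..n}. \<forall>t\<ge>0. chi j t = \<one>" using shom_vanish[of n chi] hc by blast
  then have "\<forall>j\<in>{1..n}. \<forall>t\<ge>0. psi j t = phi j t"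
  proof (intro ballI allI impI)
    fix j t assume as: "\<forall>j\<in>{1..n}. \<forall>t\<ge>0. chi j t = \<one>" "j \<in> {1..n}" "(t::real) \<ge> 0"
    have a1: "psi j t \<in> carrier G" using h as shom_closed by blast
    have a2: "phi j t \<in> carrier G" using h as shom_closed by blast
    have "psi j t \<otimes> inv phi j t = \<one>" using as unfolding chi_def by blast
    then show "psi j t = phi j t" using a1 a2 by (rule div_one_eq[rotated 2])
  qed
  then show ?thesis using cc by blast
qed

lemma mhom_finprod:
  assumes hc: "\<And>x. x \<in> carrier G \<Longrightarrow> h x \<in> carrier G"
    and hm: "\<And>x y. x \<in> carrier G \<Longrightarrow> y \<in> carrier G \<Longrightarrow> h (x \<otimes> y) = h x \<otimes> h y"
    and f: "f \<in> A \<rightarrow> carrier G" and fin: "finite A"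
  shows "h (finprod G f A) = finprod G (\<lambda>k. h (f k)) A"
proof -
  have h1: "h \<one> = \<one>" using hm[of \<one> \<one>] hc[of \<one>] by simp
  show ?thesis using fin f
  proof (induction A rule: finite_induct)
    case empty then show ?case using h1 by simp
  next
    case (insert a A)
    then have fa: "f a \<in> carrier G" and fA: "f \<in> A \<rightarrow> carrier G" by auto
    have "h (finprod G f (insert a A)) = h (f a \<otimes> finprod G f A)" using insert fa fA by simp
    also have "\<dots> = h (f a) \<otimes> finprod G (\<lambda>k. h (f k)) A" using hm fa fA insert by simp
    also have "\<dots> = finprod G (\<lambda>k. h (f k)) (insert a A)" using insert fA fa hc by (simp add: Pi_def)
    finally show ?case .
  qed
qed


lemma main_alg:
  fixes D :: "real \<Rightarrow> 'a \<Rightarrow> 'a" and rho0 :: "'a \<Rightarrow> 'a" and rho :: "nat \<Rightarrow> real \<Rightarrow> 'a \<Rightarrow> 'a"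
    and d :: nat
  assumes r0c: "\<And>x. x \<in> carrier G \<Longrightarrow> rho0 x \<in> carrier G"
    and rc: "\<And>i t x. i \<in> {1..d} \<Longrightarrow> t \<ge> 0 \<Longrightarrow> x \<in> carrier G \<Longrightarrow> rho i t x \<in> carrier G"
    and sg: "\<And>i s t x. i \<in> {1..d} \<Longrightarrow> s \<ge> 0 \<Longrightarrow> t \<ge> 0 \<Longrightarrow> x \<in> carrier G \<Longrightarrow>
               rho i (s + t) x = rho i s x \<otimes> rho i t x"
    and dec: "\<And>l x. l \<ge> 0 \<Longrightarrow> x \<in> carrier G \<Longrightarrow>
               D l x = rho0 x \<otimes> finprod G (\<lambda>i. rho i (l ^ i) x) {1..d}"
    and Dh: "\<And>l. l \<ge> 0 \<Longrightarrow> D l \<in> hom G G"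
    and Dc: "\<And>l m x. l \<ge> 0 \<Longrightarrow> m \<ge> 0 \<Longrightarrow> x \<in> carrier G \<Longrightarrow> D m (D l x) = D (m * l) x"
  shows "\<forall>i\<in>{0..d}. \<forall>j\<in>{0..d}. \<forall>l::real. l \<ge> 0 \<longrightarrow> (\<forall>x\<in>carrier G.
           idem rho0 rho i (rhoE rho0 rho j l x) = rhoE rho0 rho i l (idem rho0 rho j x)
         \<and> rhoE rho0 rho i l (idem rho0 rho j x) =
             (if i = j then rhoE rho0 rho i l x else \<one>)
         \<and> rhoE rho0 rho i l x \<in> idem rho0 rho i ` carrier G)"
proof -
  have sh: "shom G (\<lambda>t. rho i t x)" if "i \<in> {1..d}" "x \<in> carrier G" for i x
    unfolding shom_def using rc sg that by blast
  have Dcl: "D l x \<in> carrier G" if "l \<ge> 0" "x \<in> carrier G" for l x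
    using Dh[OF that(1)] that(2) unfolding hom_def by blast
  have Dm: "D l (x \<otimes> y) = D l x \<otimes> D l y" if "l \<ge> 0" "x \<in> carrier G" "y \<in> carrier G" for l x y
    using hom_mult[OF Dh[OF that(1)] that(2,3)] .
  have pcl: "(\<lambda>i. rho i (l ^ i) x) \<in> {1..d} \<rightarrow> carrier G" if "l \<ge> 0" "x \<in> carrier G" for l x
    using rc that by auto
  have r0D: "rho0 x = D 0 x" if x: "x \<in> carrier G" for x
  proof -
    have "finprod G (\<lambda>i. rho i (0 ^ i) x) {1..d} = \<one>"
    proof (rule finprod_one_eqI)
      fix i assume i: "i \<in> {1..d}"
      then have z: "(0::real) ^ i = 0" by auto
      show "rho i (0 ^ i) x = \<one>" unfolding z using shom_zero[OF sh[OF i x]] .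
    qed
    then show ?thesis using dec[of 0 x] x r0c[OF x] by simp
  qed
  have r0m: "rho0 (x \<otimes> y) = rho0 x \<otimes> rho0 y" if "x \<in> carrier G" "y \<in> carrier G" for x y
    using r0D Dm[of 0 x y] that by simp
  have rm: "rho i t (x \<otimes> y) = rho i t x \<otimes> rho i t y"
    if i: "i \<in> {1..d}" and t: "t \<ge> 0" and x: "x \<in> carrier G" and y: "y \<in> carrier G" for i t x y
  proof -
    have xy: "x \<otimes> y \<in> carrier G" using x y by simp
    have h1: "\<forall>j\<in>{1..d}. shom G (\<lambda>t. rho j t (x \<otimes> y))" using sh xy by blast
    have h2: "\<forall>j\<in>{1..d}. shom G (\<lambda>t. rho j t x \<otimes> rho j t y)"
    proof
      fix j assume j: "j \<in> {1..d}"
      show "shom G (\<lambda>t. rho j t x \<otimes> rho j t y)" unfolding shom_def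
      proof (intro conjI allI impI)
        fix t :: real assume "t \<ge> 0" then show "rho j t x \<otimes> rho j t y \<in> carrier G"
          using rc j x y by simp
      next
        fix s t :: real assume st: "s \<ge> 0" "t \<ge> 0"
        have c: "rho j s x \<in> carrier G" "rho j t x \<in> carrier G" "rho j s y \<in> carrier G" "rho j t y \<in> carrier G"
          using rc j x y st by auto
        show "rho j (s + t) x \<otimes> rho j (s + t) y = (rho j s x \<otimes> rho j s y) \<otimes> (rho j t x \<otimes> rho j t y)"
          using sg[OF j st x] sg[OF j st y] c by (simp add: m_ac)
      qed
    qed
    have e: "\<forall>l\<ge>0. rho0 (x \<otimes> y) \<otimes> finprod G (\<lambda>j. rho j (l ^ j) (x \<otimes> y)) {1..d}
               = (rho0 x \<otimes> rho0 y) \<otimes> finprod G (\<lambda>j. rho j (l ^ j) x \<otimes> rho j (l ^ j) y) {1..d}"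
    proof (intro allI impI)
      fix l :: real assume l: "l \<ge> 0"
      have c: "finprod G (\<lambda>j. rho j (l ^ j) x) {1..d} \<in> carrier G"
              "finprod G (\<lambda>j. rho j (l ^ j) y) {1..d} \<in> carrier G"
        using pcl[OF l x] pcl[OF l y] by auto
      have "rho0 (x \<otimes> y) \<otimes> finprod G (\<lambda>j. rho j (l ^ j) (x \<otimes> y)) {1..d} = D l (x \<otimes> y)"
        using dec[OF l xy] by simp
      also have "\<dots> = D l x \<otimes> D l y" using Dm[OF l x y] .
      also have "\<dots> = (rho0 x \<otimes> finprod G (\<lambda>j. rho j (l ^ j) x) {1..d}) \<otimes> (rho0 y \<otimes> finprod G (\<lambda>j. rho j (l ^ j) y) {1..d})"
        using dec[OF l x] dec[OF l y] by simp
      also have "\<dots> = (rho0 x \<otimes> rho0 y) \<otimes> (finprod G (\<lambda>j. rho j (l ^ j) x) {1..d} \<otimes> finprod G (\<lambda>j. rho j (l ^ j) y) {1..d})"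
        using c r0c[OF x] r0c[OF y] by (simp add: m_ac)
      also have "\<dots> = (rho0 x \<otimes> rho0 y) \<otimes> finprod G (\<lambda>j. rho j (l ^ j) x \<otimes> rho j (l ^ j) y) {1..d}"
        using finprod_multf[OF pcl[OF l x] pcl[OF l y]] by simp
      finally show "rho0 (x \<otimes> y) \<otimes> finprod G (\<lambda>j. rho j (l ^ j) (x \<otimes> y)) {1..d}
               = (rho0 x \<otimes> rho0 y) \<otimes> finprod G (\<lambda>j. rho j (l ^ j) x \<otimes> rho j (l ^ j) y) {1..d}" .
    qed
    have "\<forall>j\<in>{1..d}. \<forall>t\<ge>0. rho j t (x \<otimes> y) = rho j t x \<otimes> rho j t y"
      using uniq[of "rho0 (x \<otimes> y)" "rho0 x \<otimes> rho0 y" d "\<lambda>j t. rho j t (x \<otimes> y)" "\<lambda>j t. rho j t x \<otimes> rho j t y"]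
        h1 h2 e r0c x y xy by simp
    then show ?thesis using i t by blast
  qed
  have S4: "rho0 (D l x) = rho0 x \<and> (\<forall>j\<in>{1..d}. \<forall>t\<ge>0. rho j t (D l x) = rho j (l ^ j * t) x)"
    if l: "l \<ge> 0" and x: "x \<in> carrier G" for l x
  proof -
    have Dx: "D l x \<in> carrier G" using Dcl[OF l x] .
    have h1: "\<forall>j\<in>{1..d}. shom G (\<lambda>t. rho j t (D l x))" using sh Dx by blast
    have h2: "\<forall>j\<in>{1..d}. shom G (\<lambda>t. rho j (l ^ j * t) x)"
    proof
      fix j assume j: "j \<in> {1..d}"
      show "shom G (\<lambda>t. rho j (l ^ j * t) x)" unfolding shom_def
      proof (intro conjI allI impI)
        fix t :: real assume "t \<ge> 0" then show "rho j (l ^ j * t) x \<in> carrier G"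
          using rc j x l by simp
      next
        fix s t :: real assume st: "s \<ge> 0" "t \<ge> 0"
        have "l ^ j * s \<ge> 0" "l ^ j * t \<ge> 0" using st l by auto
        then show "rho j (l ^ j * (s + t)) x = rho j (l ^ j * s) x \<otimes> rho j (l ^ j * t) x"
          using sg[OF j _ _ x] by (simp add: distrib_left)
      qed
    qed
    have e: "\<forall>m\<ge>0. rho0 (D l x) \<otimes> finprod G (\<lambda>j. rho j (m ^ j) (D l x)) {1..d}
               = rho0 x \<otimes> finprod G (\<lambda>j. rho j (l ^ j * m ^ j) x) {1..d}"
    proof (intro allI impI)
      fix m :: real assume m: "m \<ge> 0"
      have "rho0 (D l x) \<otimes> finprod G (\<lambda>j. rho j (m ^ j) (D l x)) {1..d} = D m (D l x)"
        using dec[OF m Dx] by simp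
      also have "\<dots> = D (m * l) x" using Dc[OF l m x] .
      also have "\<dots> = rho0 x \<otimes> finprod G (\<lambda>j. rho j ((m * l) ^ j) x) {1..d}"
        using dec[of "m * l" x] m l x by simp
      also have "\<dots> = rho0 x \<otimes> finprod G (\<lambda>j. rho j (l ^ j * m ^ j) x) {1..d}"
        by (simp add: power_mult_distrib mult.commute)
      finally show "rho0 (D l x) \<otimes> finprod G (\<lambda>j. rho j (m ^ j) (D l x)) {1..d}
               = rho0 x \<otimes> finprod G (\<lambda>j. rho j (l ^ j * m ^ j) x) {1..d}" .
    qed
    show ?thesis
      using uniq[of "rho0 (D l x)" "rho0 x" d "\<lambda>j t. rho j t (D l x)" "\<lambda>j t. rho j (l ^ j * t) x"]
        h1 h2 e r0c x Dx by simp
  qed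
  have S5: "rho i t (rho0 x) = \<one> \<and> (\<forall>k\<in>{1..d}. \<forall>s\<ge>0. rho i t (rho k s x) = (if k = i then rho i (s * t) x else \<one>))"
    if i: "i \<in> {1..d}" and t: "t \<ge> 0" and x: "x \<in> carrier G" for i t x
  proof -
    have h1: "\<forall>k\<in>{1..d}. shom G (\<lambda>s. rho i t (rho k s x))"
    proof
      fix k assume k: "k \<in> {1..d}"
      show "shom G (\<lambda>s. rho i t (rho k s x))" unfolding shom_def
      proof (intro conjI allI impI)
        fix s :: real assume "s \<ge> 0" then show "rho i t (rho k s x) \<in> carrier G"
          using rc k x i t by simp
      next
        fix s s' :: real assume st: "s \<ge> 0" "s' \<ge> 0"
        show "rho i t (rho k (s + s') x) = rho i t (rho k s x) \<otimes> rho i t (rho k s' x)"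
          using sg[OF k st x] rm[OF i t] rc[OF k _ x] st by simp
      qed
    qed
    have h2: "\<forall>k\<in>{1..d}. shom G (\<lambda>s. if k = i then rho i (s * t) x else \<one>)"
    proof
      fix k assume k: "k \<in> {1..d}"
      show "shom G (\<lambda>s. if k = i then rho i (s * t) x else \<one>)" unfolding shom_def
      proof (intro conjI allI impI)
        fix s :: real assume "s \<ge> 0" then show "(if k = i then rho i (s * t) x else \<one>) \<in> carrier G"
          using rc i x t by simp
      next
        fix s s' :: real assume st: "s \<ge> 0" "s' \<ge> 0"
        have "s * t \<ge> 0" "s' * t \<ge> 0" using st t by auto
        then show "(if k = i then rho i ((s + s') * t) x else \<one>) =
              (if k = i then rho i (s * t) x else \<one>) \<otimes> (if k = i then rho i (s' * t) x else \<one>)"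
          using sg[OF i _ _ x] by (simp add: distrib_right)
      qed
    qed
    have e: "\<forall>l\<ge>0. rho i t (rho0 x) \<otimes> finprod G (\<lambda>k. rho i t (rho k (l ^ k) x)) {1..d}
               = \<one> \<otimes> finprod G (\<lambda>k. if k = i then rho i (l ^ k * t) x else \<one>) {1..d}"
    proof (intro allI impI)
      fix l :: real assume l: "l \<ge> 0"
      have fcl: "(\<lambda>k. if k = i then rho i (l ^ k * t) x else \<one>) \<in> {1..d} \<rightarrow> carrier G"
        using rc[OF i _ x] l t by auto
      have hc: "\<And>y. y \<in> carrier G \<Longrightarrow> rho i t y \<in> carrier G" using rc i t by simp
      have hm: "\<And>y z. y \<in> carrier G \<Longrightarrow> z \<in> carrier G \<Longrightarrow> rho i t (y \<otimes> z) = rho i t y \<otimes> rho i t z"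
        using rm i t by simp
      have "rho i t (rho0 x) \<otimes> finprod G (\<lambda>k. rho i t (rho k (l ^ k) x)) {1..d}
            = rho i t (rho0 x) \<otimes> rho i t (finprod G (\<lambda>k. rho k (l ^ k) x) {1..d})"
        using mhom_finprod[OF hc hm pcl[OF l x]] by simp
      also have "\<dots> = rho i t (D l x)"
        using dec[OF l x] hm r0c[OF x] pcl[OF l x] by simp
      also have "\<dots> = rho i (l ^ i * t) x" using S4[OF l x] i t by simp
      also have "\<dots> = finprod G (\<lambda>k. if k = i then rho i (l ^ k * t) x else \<one>) {1..d}"
        using finprod_singleton_swap[of i "{1..d}" "\<lambda>k. rho i (l ^ k * t) x"] i rc[OF i _ x] l t
        by (simp add: Pi_def)
      finally show "rho i t (rho0 x) \<otimes> finprod G (\<lambda>k. rho i t (rho k (l ^ k) x)) {1..d}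
               = \<one> \<otimes> finprod G (\<lambda>k. if k = i then rho i (l ^ k * t) x else \<one>) {1..d}"
        using fcl by simp
    qed
    have u: "rho i t (rho0 x) = \<one> \<and> (\<forall>k\<in>{1..d}. \<forall>s\<ge>0. rho i t (rho k s x) = (if k = i then rho i (s * t) x else \<one>))"
      using uniq[of "rho i t (rho0 x)" "\<one>" d "\<lambda>k s. rho i t (rho k s x)" "\<lambda>k s. if k = i then rho i (s * t) x else \<one>"]
        h1 h2 e rc[OF i t] r0c[OF x] by simp
    then show ?thesis .
  qed
  have S6: "rho0 (rho0 x) = rho0 x \<and> (\<forall>k\<in>{1..d}. \<forall>s\<ge>0. rho0 (rho k s x) = \<one>)"
    if x: "x \<in> carrier G" for x
  proof -
    have h1: "\<forall>k\<in>{1..d}. shom G (\<lambda>s. rho0 (rho k s x))"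
    proof
      fix k assume k: "k \<in> {1..d}"
      show "shom G (\<lambda>s. rho0 (rho k s x))" unfolding shom_def
      proof (intro conjI allI impI)
        fix s :: real assume "s \<ge> 0" then show "rho0 (rho k s x) \<in> carrier G"
          using rc k x r0c by simp
      next
        fix s s' :: real assume st: "s \<ge> 0" "s' \<ge> 0"
        show "rho0 (rho k (s + s') x) = rho0 (rho k s x) \<otimes> rho0 (rho k s' x)"
          using sg[OF k st x] r0m rc[OF k _ x] st by simp
      qed
    qed
    have h2: "\<forall>k\<in>{1..d}. shom G (\<lambda>s. \<one>)" unfolding shom_def by simp
    have e: "\<forall>l\<ge>0. rho0 (rho0 x) \<otimes> finprod G (\<lambda>k. rho0 (rho k (l ^ k) x)) {1..d}
               = rho0 x \<otimes> finprod G (\<lambda>k. \<one>) {1..d}"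
    proof (intro allI impI)
      fix l :: real assume l: "l \<ge> 0"
      have "rho0 (rho0 x) \<otimes> finprod G (\<lambda>k. rho0 (rho k (l ^ k) x)) {1..d}
            = rho0 (rho0 x) \<otimes> rho0 (finprod G (\<lambda>k. rho k (l ^ k) x) {1..d})"
        using mhom_finprod[OF r0c r0m pcl[OF l x]] by simp
      also have "\<dots> = rho0 (D l x)"
        using dec[OF l x] r0m r0c[OF x] pcl[OF l x] by simp
      also have "\<dots> = rho0 x" using S4[OF l x] by simp
      finally show "rho0 (rho0 x) \<otimes> finprod G (\<lambda>k. rho0 (rho k (l ^ k) x)) {1..d}
               = rho0 x \<otimes> finprod G (\<lambda>k. \<one>) {1..d}"
        using r0c[OF x] by simp
    qed
    show ?thesis
      using uniq[of "rho0 (rho0 x)" "rho0 x" d "\<lambda>k s. rho0 (rho k s x)" "\<lambda>k s. \<one>"]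
        h1 h2 e r0c[OF x] r0c[OF r0c[OF x]] by simp
  qed
  show ?thesis
  proof (intro ballI allI impI)
    fix i j l x assume i: "i \<in> {0..d}" and j: "j \<in> {0..d}" and l: "(l::real) \<ge> 0" and x: "x \<in> carrier G"
    have third: "rhoE rho0 rho i l x \<in> idem rho0 rho i ` carrier G"
    proof (cases "i = 0")
      case True
      then have "rhoE rho0 rho i l x = idem rho0 rho i (rho0 x)"
        using S6[OF x] unfolding rhoE_def idem_def by simp
      then show ?thesis using r0c[OF x] by blast
    next
      case False
      then have i1: "i \<in> {1..d}" using i by auto
      have "rho i 1 (rho i l x) = rho i l x" using S5[OF i1 _ x, of 1] i1 l by simp
      then have "rhoE rho0 rho i l x = idem rho0 rho i (rho i l x)"
        using False unfolding rhoE_def idem_def by simp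
      then show ?thesis using rc[OF i1 l x] by blast
    qed
    have main: "idem rho0 rho i (rhoE rho0 rho j l x) = rhoE rho0 rho i l (idem rho0 rho j x)
         \<and> rhoE rho0 rho i l (idem rho0 rho j x) = (if i = j then rhoE rho0 rho i l x else \<one>)"
    proof (cases "i = 0")
      case i0: True
      show ?thesis
      proof (cases "j = 0")
        case True
        then show ?thesis using i0 S6[OF x] unfolding rhoE_def idem_def by simp
      next
        case False
        then have j1: "j \<in> {1..d}" using j by auto
        show ?thesis using i0 False S6[OF x] j1 l unfolding rhoE_def idem_def by simp
      qed
    next
      case i1': False
      then have i1: "i \<in> {1..d}" using i by auto
      show ?thesis
      proof (cases "j = 0")
        case True
        then show ?thesis using i1' S5[OF i1 _ x, of 1] S5[OF i1 l x] unfolding rhoE_def idem_def by simp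
      next
        case False
        then have j1: "j \<in> {1..d}" using j by auto
        show ?thesis using i1' False S5[OF i1 _ x, of 1] S5[OF i1 l x] j1 l unfolding rhoE_def idem_def
          by simp
      qed
    qed
    show "idem rho0 rho i (rhoE rho0 rho j l x) = rhoE rho0 rho i l (idem rho0 rho j x)
         \<and> rhoE rho0 rho i l (idem rho0 rho j x) = (if i = j then rhoE rho0 rho i l x else \<one>)
         \<and> rhoE rho0 rho i l x \<in> idem rho0 rho i ` carrier G"
      using main third by blast
  qed
qed

end

type_synonym 'v zk = "'v set \<Rightarrow>\<^sub>0 int"

lemma ZK_simps [simp]: "carrier ZK = {p. Poly_Mapping.keys p \<subseteq> Kc}" "x \<otimes>\<^bsub>ZK\<^esub> y = x + y" "\<one>\<^bsub>ZK\<^esub> = 0"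
  by (simp_all add: ZK_def)

lemma ZK_comm_group: "comm_group (ZK :: ('v::euclidean_space) zk monoid)"
proof (rule comm_groupI)
  fix x y :: "'v zk" assume "x \<in> carrier ZK" "y \<in> carrier ZK"
  then show "x \<otimes>\<^bsub>ZK\<^esub> y \<in> carrier ZK" using keys_add[of x y] by auto
next
  fix x :: "'v zk" assume x: "x \<in> carrier ZK"
  then have "- x \<in> carrier ZK" "- x \<otimes>\<^bsub>ZK\<^esub> x = \<one>\<^bsub>ZK\<^esub>" by auto
  then show "\<exists>y\<in>carrier ZK. y \<otimes>\<^bsub>ZK\<^esub> x = \<one>\<^bsub>ZK\<^esub>" by blast
qed (auto simp: algebra_simps)

lemma ZK_inv: assumes "(p :: ('v::euclidean_space) zk) \<in> carrier ZK" shows "inv\<^bsub>ZK\<^esub> p = - p"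
proof -
  interpret comm_group "ZK :: 'v zk monoid" by (rule ZK_comm_group)
  have "- p \<in> carrier ZK" using assms by simp
  moreover have "- p \<otimes>\<^bsub>ZK\<^esub> p = \<one>\<^bsub>ZK\<^esub>" by simp
  ultimately show ?thesis using inv_equality assms by blast
qed

definition qualT :: "('v::euclidean_space) zk topology \<Rightarrow> bool" where
  "qualT T \<longleftrightarrow> group_topology (carrier ZK) T \<and> Hausdorff_space T \<and> continuous_map Ktop T gen"

definition ZKsub :: "('v::euclidean_space) zk set set" where
  "ZKsub = insert (carrier ZK) (\<Union>{{U. openin T U} | T. qualT T})"

lemma ZKtop_eq: "ZKtop = topology_generated_by ZKsub"
  by (simp add: ZKtop_def ZKsub_def qualT_def)

lemma ZKsub_cases:
  assumes "U \<in> ZKsub"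
  obtains "U = carrier ZK"
  | T where "qualT T" "openin T U"
  using assms unfolding ZKsub_def by blast

lemma qualT_topspace: "qualT T \<Longrightarrow> topspace T = carrier ZK"
  by (simp add: qualT_def group_topology_def)

lemma ZKsub_Union: "\<Union>ZKsub = carrier ZK"
proof
  show "\<Union>ZKsub \<subseteq> carrier ZK"
  proof
    fix p assume "p \<in> \<Union>ZKsub"
    then obtain U where U: "U \<in> ZKsub" "p \<in> U" by blast
    from U(1) show "p \<in> carrier ZK"
    proof (cases rule: ZKsub_cases)
      case 1 then show ?thesis using U by simp
    next
      case (2 T) then show ?thesis using U openin_subset[of T U] qualT_topspace by blast
    qed
  qed
  show "carrier ZK \<subseteq> \<Union>ZKsub" unfolding ZKsub_def by blast
qed

lemma topspace_ZKtop: "topspace ZKtop = carrier ZK"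
  unfolding ZKtop_eq topology_generated_by_topspace ZKsub_Union ..

lemma cont_id_T:
  assumes "qualT T"
  shows "continuous_map ZKtop T id"
  unfolding continuous_map_def
proof (intro conjI allI impI)
  show "id \<in> topspace ZKtop \<rightarrow> topspace T" using qualT_topspace[OF assms] topspace_ZKtop by auto
next
  fix U assume U: "openin T U"
  have "{x \<in> topspace ZKtop. id x \<in> U} = U"
    using openin_subset[OF U] qualT_topspace[OF assms] topspace_ZKtop by auto
  moreover have "U \<in> ZKsub" using assms U unfolding ZKsub_def by blast
  ultimately show "openin ZKtop {x \<in> topspace ZKtop. id x \<in> U}"
    unfolding ZKtop_eq by (simp add: topology_generated_by_Basis)
qed

lemma ZK_add_cont: "continuous_map (prod_topology ZKtop ZKtop) ZKtop (\<lambda>(a, b). a + b)"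
proof -
  let ?f = "\<lambda>(a::'a zk, b). a + b"
  have tsp: "topspace (prod_topology ZKtop ZKtop) = carrier ZK \<times> carrier ZK"
    by (simp add: topspace_ZKtop)
  have img: "?f ` topspace (prod_topology ZKtop ZKtop) \<subseteq> \<Union>ZKsub"
    unfolding tsp ZKsub_Union using keys_add by fastforce
  have op: "openin (prod_topology ZKtop ZKtop) (?f -` U \<inter> topspace (prod_topology ZKtop ZKtop))"
    if U: "U \<in> ZKsub" for U
    using U
  proof (cases rule: ZKsub_cases)
    case 1
    then have eq: "?f -` U \<inter> topspace (prod_topology ZKtop ZKtop) = topspace (prod_topology ZKtop ZKtop)"
      using img ZKsub_Union by blast
    show ?thesis by (subst eq) (rule openin_topspace)
  next
    case (2 T)
    have c1: "continuous_map (prod_topology ZKtop ZKtop) (prod_topology T T) (\<lambda>(x, y). (id x, id y))"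
      using cont_id_T[OF 2(1)] by (intro continuous_map_prod_top[THEN iffD2] disjI2) (simp add: id_def)
    have c2: "continuous_map (prod_topology T T) T ?f"
      using 2(1) unfolding qualT_def group_topology_def by blast
    have "continuous_map (prod_topology ZKtop ZKtop) T (?f \<circ> (\<lambda>(x, y). (id x, id y)))"
      using continuous_map_compose[OF c1 c2] .
    moreover have "?f \<circ> (\<lambda>(x, y). (id x, id y)) = ?f" by (auto simp: fun_eq_iff)
    ultimately have c: "continuous_map (prod_topology ZKtop ZKtop) T ?f" by simp
    have "openin (prod_topology ZKtop ZKtop) {x \<in> topspace (prod_topology ZKtop ZKtop). ?f x \<in> U}"
      using openin_continuous_map_preimage[OF c 2(2)] .
    moreover have "{x \<in> topspace (prod_topology ZKtop ZKtop). ?f x \<in> U} = ?f -` U \<inter> topspace (prod_topology ZKtop ZKtop)"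
      by blast
    ultimately show ?thesis by simp
  qed
  have "continuous_map (prod_topology ZKtop ZKtop) (topology_generated_by ZKsub) ?f"
    by (rule continuous_on_generated_topo) (use op img in auto)
  then show ?thesis using ZKtop_eq by metis
qed


lemma ZK_neg_cont: "continuous_map ZKtop ZKtop (uminus :: ('v::euclidean_space) zk \<Rightarrow> 'v zk)"
proof -
  let ?f = "uminus :: 'v zk \<Rightarrow> 'v zk"
  have img: "?f ` topspace ZKtop \<subseteq> \<Union>ZKsub"
    unfolding topspace_ZKtop ZKsub_Union by auto
  have op: "openin ZKtop (?f -` U \<inter> topspace ZKtop)" if U: "U \<in> ZKsub" for U
    using U
  proof (cases rule: ZKsub_cases)
    case 1
    then have eq: "?f -` U \<inter> topspace ZKtop = topspace ZKtop"
      using img ZKsub_Union by blast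
    show ?thesis by (subst eq) (rule openin_topspace)
  next
    case (2 T)
    have c2: "continuous_map T T ?f"
      using 2(1) unfolding qualT_def group_topology_def by blast
    have c: "continuous_map ZKtop T (?f \<circ> id)"
      using continuous_map_compose[OF cont_id_T[OF 2(1)] c2] .
    have "openin ZKtop {x \<in> topspace ZKtop. (?f \<circ> id) x \<in> U}"
      using openin_continuous_map_preimage[OF c 2(2)] .
    moreover have "{x \<in> topspace ZKtop. (?f \<circ> id) x \<in> U} = ?f -` U \<inter> topspace ZKtop"
      by auto
    ultimately show ?thesis by simp
  qed
  have "continuous_map ZKtop (topology_generated_by ZKsub) ?f"
    by (rule continuous_on_generated_topo) (use op img in auto)
  then show ?thesis using ZKtop_eq by metis
qed

lemma Kc_Int:
  assumes "B \<in> Kc" "C \<in> Kc" "B \<union> C \<in> Kc" shows "B \<inter> C \<in> Kc"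
proof -
  have cB: "compact B" "convex B" "B \<noteq> {}" and cC: "compact C" "convex C" "C \<noteq> {}"
    and cU: "convex (B \<union> C)" using assms unfolding Kc_def by auto
  have "connected (B \<union> C)" using convex_connected[OF cU] .
  moreover have "closed B" "closed C" using cB cC compact_imp_closed by auto
  ultimately have ne: "B \<inter> C \<noteq> {}" using connected_closedD[of "B \<union> C" B C] cB cC by blast
  have "compact (B \<inter> C)" using cB cC by (intro compact_Int)
  moreover have "convex (B \<inter> C)" using cB cC by (intro convex_Int)
  ultimately show ?thesis using ne unfolding Kc_def by simp
qed

lemma Kc_affine:
  fixes f :: "'v::euclidean_space \<Rightarrow> 'v"
  assumes X: "X \<in> Kc" and f: "linear f"
  shows "(\<lambda>x. f x + b) ` X \<in> Kc"
proof -
  have cX: "compact X" "convex X" "X \<noteq> {}" using X unfolding Kc_def by auto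
  have eq: "(\<lambda>x. f x + b) ` X = (+) b ` (f ` X)" by (auto simp: image_image add.commute)
  have "continuous_on X f" by (rule linear_continuous_on[OF linear_conv_bounded_linear[THEN iffD1, OF f]])
  then have "compact (f ` X)" using cX by (intro compact_continuous_image)
  then have "compact ((+) b ` (f ` X))" by (rule compact_translation)
  moreover have "convex ((+) b ` (f ` X))" using convex_linear_image[OF f cX(2)] by (rule convex_translation)
  ultimately show ?thesis unfolding eq Kc_def using cX by auto
qed

lemma Kc_scale:
  assumes X: "X \<in> Kc" shows "(\<lambda>v. l *\<^sub>R v) ` X \<in> Kc"
  using X compact_scaling convex_scaling unfolding Kc_def by auto

lemma gen_carrier: "X \<in> Kc \<Longrightarrow> gen X \<in> carrier ZK"
  by (simp add: gen_def)

lemma ZK_add_closed: "a \<in> carrier ZK \<Longrightarrow> b \<in> carrier ZK \<Longrightarrow> a + b \<in> carrier ZK"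
  using keys_add[of a b] by auto

lemma ZK_diff_closed: "a \<in> carrier ZK \<Longrightarrow> b \<in> carrier ZK \<Longrightarrow> a - b \<in> carrier ZK"
  using keys_diff[of a b] by auto

lemma CBrel_sub: assumes "affine_group G" shows "CBrel G \<subseteq> carrier ZK"
proof
  interpret comm_group ZK by (rule ZK_comm_group)
  fix p assume "p \<in> CBrel G"
  then consider B C where "B \<in> Kc" "C \<in> Kc" "B \<union> C \<in> Kc" "p = gen (B \<union> C) - gen B - gen C + gen (B \<inter> C)"
    | X g where "X \<in> Kc" "g \<in> G" "p = gen X - gen (g ` X)"
    unfolding CBrel_def by blast
  then show "p \<in> carrier ZK"
  proof cases
    case 1
    then have "B \<inter> C \<in> Kc" using Kc_Int by blast
    then have "gen (B \<union> C) \<in> carrier ZK" "gen B \<in> carrier ZK" "gen C \<in> carrier ZK" "gen (B \<inter> C) \<in> carrier ZK"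
      using 1 gen_carrier by auto
    then show ?thesis using 1 by (simp only: ZK_add_closed ZK_diff_closed)
  next
    case 2
    obtain f b where "linear f" "g = (\<lambda>x. f x + b)" using assms 2 unfolding affine_group_def by blast
    then have "g ` X \<in> Kc" using Kc_affine 2 by blast
    then have "gen X \<in> carrier ZK" "gen (g ` X) \<in> carrier ZK" using 2 gen_carrier by auto
    then show ?thesis using 2 by (simp only: ZK_diff_closed)
  qed
qed

lemma CBker_subgroup: assumes aff: "affine_group G" shows "subgroup (CBker G) ZK"
proof -
  interpret comm_group ZK by (rule ZK_comm_group)
  let ?S = "generate ZK (CBrel G)"
  have S: "subgroup ?S ZK" by (rule generate_is_subgroup[OF CBrel_sub[OF aff]])
  have Ssub: "?S \<subseteq> topspace ZKtop" using subgroup.subset[OF S] unfolding topspace_ZKtop .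
  have H: "CBker G = ZKtop closure_of ?S" by (simp add: CBker_def)
  show ?thesis
  proof (rule subgroupI)
    show "CBker G \<subseteq> carrier ZK" unfolding H using closure_of_subset_topspace topspace_ZKtop by metis
  next
    have "\<one>\<^bsub>ZK\<^esub> \<in> ?S" using subgroup.one_closed[OF S] .
    then show "CBker G \<noteq> {}" unfolding H using closure_of_subset[OF Ssub] by blast
  next
    fix a assume a: "a \<in> CBker G"
    have i1: "uminus ` (ZKtop closure_of ?S) \<subseteq> ZKtop closure_of (uminus ` ?S)"
      by (rule continuous_map_image_closure_subset[OF ZK_neg_cont])
    have i2: "uminus ` ?S \<subseteq> ?S"
    proof
      fix y assume "y \<in> uminus ` ?S"
      then obtain z where z: "z \<in> ?S" "y = - z" by blast
      have "inv\<^bsub>ZK\<^esub> z \<in> ?S" using subgroup.m_inv_closed[OF S z(1)] .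
      then show "y \<in> ?S" using ZK_inv[of z] subgroup.mem_carrier[OF S z(1)] z(2) by simp
    qed
    have "- a \<in> uminus ` (ZKtop closure_of ?S)" using a unfolding H by (rule imageI)
    then have "- a \<in> ZKtop closure_of (uminus ` ?S)" using i1 by (rule subsetD[rotated])
    then have na: "- a \<in> CBker G" unfolding H using closure_of_mono[OF i2] by (rule subsetD[rotated])
    have ac: "a \<in> carrier ZK" using a closure_of_subset_topspace[of ZKtop ?S] unfolding H topspace_ZKtop by (rule subsetD[rotated])
    show "inv\<^bsub>ZK\<^esub> a \<in> CBker G" unfolding ZK_inv[OF ac] by (rule na)
  next
    fix a b assume a: "a \<in> CBker G" and b: "b \<in> CBker G"
    let ?f = "\<lambda>(a :: 'a zk, b). a + b"
    have "(a, b) \<in> (prod_topology ZKtop ZKtop) closure_of (?S \<times> ?S)"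
      using a b unfolding H closure_of_Times by (rule SigmaI)
    then have "?f (a, b) \<in> ?f ` ((prod_topology ZKtop ZKtop) closure_of (?S \<times> ?S))" by (rule imageI)
    then have "?f (a, b) \<in> ZKtop closure_of (?f ` (?S \<times> ?S))"
      using continuous_map_image_closure_subset[OF ZK_add_cont] by (rule subsetD[rotated])
    moreover have sub: "?f ` (?S \<times> ?S) \<subseteq> ?S"
    proof
      fix y assume "y \<in> ?f ` (?S \<times> ?S)"
      then obtain u v where "u \<in> ?S" "v \<in> ?S" "y = u + v" by auto
      then show "y \<in> ?S" using subgroup.m_closed[OF S, of u v] by simp
    qed
    ultimately have "a + b \<in> ZKtop closure_of ?S" using closure_of_mono[OF sub] by auto
    then show "a \<otimes>\<^bsub>ZK\<^esub> b \<in> CBker G" unfolding H by simp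
  qed
qed

lemma CB_comm_group: "affine_group G \<Longrightarrow> comm_group (CB G)"
  unfolding CB_def by (rule comm_group.abelian_FactGroup[OF ZK_comm_group CBker_subgroup])

lemma CBker_normal: "affine_group G \<Longrightarrow> CBker G \<lhd> ZK"
  by (rule comm_group.subgroup_imp_normal[OF ZK_comm_group CBker_subgroup])

lemma carrier_CB: "carrier (CB G) = (\<lambda>p. CBker G #>\<^bsub>ZK\<^esub> p) ` carrier ZK"
  unfolding CB_def by (rule carrier_FactGroup)

lemma topspace_CBtop: "topspace (CBtop G) = carrier (CB G)"
proof -
  let ?P = "\<lambda>U. U \<subseteq> carrier (CB G) \<and> openin ZKtop {p \<in> carrier ZK. CBker G #>\<^bsub>ZK\<^esub> p \<in> U}"
  have A: "?P (S \<inter> T)" if S: "?P S" and T: "?P T" for S T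
  proof -
    have "{p \<in> carrier ZK. CBker G #>\<^bsub>ZK\<^esub> p \<in> S \<inter> T} =
          {p \<in> carrier ZK. CBker G #>\<^bsub>ZK\<^esub> p \<in> S} \<inter> {p \<in> carrier ZK. CBker G #>\<^bsub>ZK\<^esub> p \<in> T}" by blast
    then show ?thesis using S T by auto
  qed
  have B: "?P (\<Union>K)" if K: "\<forall>k\<in>K. ?P k" for K
  proof -
    have "{p \<in> carrier ZK. CBker G #>\<^bsub>ZK\<^esub> p \<in> \<Union>K} = (\<Union>k\<in>K. {p \<in> carrier ZK. CBker G #>\<^bsub>ZK\<^esub> p \<in> k})" by blast
    then show ?thesis using K by (auto intro!: openin_Union)
  qed
  have ist: "istopology ?P"
    unfolding istopology_def using A B by blast
  have op: "openin (CBtop G) = ?P" unfolding CBtop_def using topology_inverse'[OF ist] .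
  have "{p \<in> carrier ZK. CBker G #>\<^bsub>ZK\<^esub> p \<in> carrier (CB G)} = carrier ZK"
    using carrier_CB by blast
  then have "openin ZKtop {p \<in> carrier ZK. CBker G #>\<^bsub>ZK\<^esub> p \<in> carrier (CB G)}"
    using openin_topspace[of ZKtop] unfolding topspace_ZKtop by simp
  then have "?P (carrier (CB G))" by simp
  then show ?thesis unfolding topspace_def op by blast
qed


lemma dil_comp:
  fixes G :: "('v::euclidean_space \<Rightarrow> 'v) set"
  assumes aff: "affine_group G" and dil: "is_dilation G D" and l: "l \<ge> 0" and m: "m \<ge> 0"
    and x: "x \<in> carrier (CB G)"
  shows "D m (D l x) = D (m * l) x"
proof -
  interpret N: normal "CBker G" "ZK :: 'v zk monoid" using CBker_normal[OF aff] .
  interpret C: comm_group "CB G" using CB_comm_group[OF aff] .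
  interpret Z: comm_group "ZK :: 'v zk monoid" by (rule ZK_comm_group)
  let ?q = "\<lambda>p. CBker G #>\<^bsub>ZK\<^esub> p"
  have gZ: "group (ZK :: 'v zk monoid)" using ZK_comm_group unfolding comm_group_def by blast
  have gC: "group (CB G)" using CB_comm_group[OF aff] unfolding comm_group_def by blast
  have q: "?q \<in> hom ZK (CB G)" using N.r_coset_hom_Mod unfolding CB_def .
  have Dh: "D t \<in> hom (CB G) (CB G)" if "t \<ge> 0" for t using dil that unfolding is_dilation_def by blast
  have Dcls: "D t (cls G X) = cls G ((\<lambda>v. t *\<^sub>R v) ` X)" if "t \<ge> 0" "X \<in> Kc" for t X
    using dil that unfolding is_dilation_def by blast
  define f1 where "f1 = D m \<circ> (D l \<circ> ?q)"
  define f2 where "f2 = D (m * l) \<circ> ?q"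
  have f1h: "f1 \<in> hom ZK (CB G)" unfolding f1_def using hom_compose[OF hom_compose[OF q Dh[OF l]] Dh[OF m]] .
  have f2h: "f2 \<in> hom ZK (CB G)" unfolding f2_def using hom_compose[OF q Dh] l m by simp
  have g1: "group_hom ZK (CB G) f1" unfolding group_hom_def group_hom_axioms_def
    using f1h gZ gC by blast
  have g2: "group_hom ZK (CB G) f2" unfolding group_hom_def group_hom_axioms_def
    using f2h gZ gC by blast
  have P: "Poly_Mapping.keys p \<subseteq> Kc \<and> f1 p = f2 p" if p: "Poly_Mapping.keys p \<subseteq> Kc" for p
    using p
  proof (induction p rule: frag_induction)
    case zero
    have "f1 0 = \<one>\<^bsub>CB G\<^esub>" using group_hom.hom_one[OF g1] by simp
    moreover have "f2 0 = \<one>\<^bsub>CB G\<^esub>" using group_hom.hom_one[OF g2] by simp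
    ultimately show ?case by simp
  next
    case (one X)
    have X: "X \<in> Kc" using one .
    have lX: "(\<lambda>v. l *\<^sub>R v) ` X \<in> Kc" using Kc_scale[OF X] .
    have "f1 (frag_of X) = D m (D l (cls G X))" unfolding f1_def cls_def gen_def by simp
    also have "\<dots> = cls G ((\<lambda>v. m *\<^sub>R v) ` (\<lambda>v. l *\<^sub>R v) ` X)" using Dcls[OF l X] Dcls[OF m lX] by simp
    also have "\<dots> = cls G ((\<lambda>v. (m * l) *\<^sub>R v) ` X)" by (simp add: image_image)
    also have "\<dots> = D (m * l) (cls G X)" using Dcls[of "m * l" X] l m X by simp
    also have "\<dots> = f2 (frag_of X)" unfolding f2_def cls_def gen_def by simp
    finally show ?case using X by simp
  next
    case (diff a b)
    have ac: "a \<in> carrier ZK" and bc: "b \<in> carrier ZK" using diff by auto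
    have e: "a - b = a \<otimes>\<^bsub>ZK\<^esub> inv\<^bsub>ZK\<^esub> b" using ZK_inv[OF bc] by simp
    have ib: "inv\<^bsub>ZK\<^esub> b \<in> carrier ZK" using bc ZK_inv[OF bc] by simp
    have "f1 (a - b) = f1 a \<otimes>\<^bsub>CB G\<^esub> inv\<^bsub>CB G\<^esub> f1 b"
      unfolding e using group_hom.hom_mult[OF g1 ac ib] group_hom.hom_inv[OF g1 bc] by simp
    moreover have "f2 (a - b) = f2 a \<otimes>\<^bsub>CB G\<^esub> inv\<^bsub>CB G\<^esub> f2 b"
      unfolding e using group_hom.hom_mult[OF g2 ac ib] group_hom.hom_inv[OF g2 bc] by simp
    moreover have "Poly_Mapping.keys (a - b) \<subseteq> Kc" using diff keys_diff[of a b] by blast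
    ultimately show ?case using diff by simp
  qed
  obtain p where p: "p \<in> carrier ZK" "x = ?q p" using x carrier_CB by blast
  have "f1 p = f2 p" using P p(1) by simp
  then show ?thesis unfolding f1_def f2_def p(2) by simp
qed


theorem lemma6p8:
  fixes G :: "('v::euclidean_space \<Rightarrow> 'v) set"
    and D :: "real \<Rightarrow> ('v set \<Rightarrow>\<^sub>0 int) set \<Rightarrow> ('v set \<Rightarrow>\<^sub>0 int) set"
    and rho0 :: "('v set \<Rightarrow>\<^sub>0 int) set \<Rightarrow> ('v set \<Rightarrow>\<^sub>0 int) set"
    and rho :: "nat \<Rightarrow> real \<Rightarrow> ('v set \<Rightarrow>\<^sub>0 int) set \<Rightarrow> ('v set \<Rightarrow>\<^sub>0 int) set"
  assumes "affine_group G"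
    and "is_dilation G D"
    and "dilation_components G D rho0 rho"
  shows "\<forall>i\<in>{0..DIM('v)}. \<forall>j\<in>{0..DIM('v)}. \<forall>l::real. l \<ge> 0 \<longrightarrow> (\<forall>x\<in>carrier (CB G).
           idem rho0 rho i (rhoE rho0 rho j l x) = rhoE rho0 rho i l (idem rho0 rho j x)
         \<and> rhoE rho0 rho i l (idem rho0 rho j x) =
             (if i = j then rhoE rho0 rho i l x else \<one>\<^bsub>CB G\<^esub>)
         \<and> rhoE rho0 rho i l x \<in> idem rho0 rho i ` carrier (CB G))"
proof -
  interpret C: comm_group "CB G" using CB_comm_group[OF assms(1)] .
  have dc: "continuous_map (CBtop G) (CBtop G) rho0"
    "\<And>i. i \<in> {1..DIM('v)} \<Longrightarrow> continuous_map (prod_topology (top_of_set {0..}) (CBtop G)) (CBtop G) (\<lambda>(l, x). rho i l x)"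
    "\<And>i s t x. i \<in> {1..DIM('v)} \<Longrightarrow> s \<ge> 0 \<Longrightarrow> t \<ge> 0 \<Longrightarrow> x \<in> carrier (CB G) \<Longrightarrow>
        rho i (s + t) x = rho i s x \<otimes>\<^bsub>CB G\<^esub> rho i t x"
    "\<And>l x. l \<ge> 0 \<Longrightarrow> x \<in> carrier (CB G) \<Longrightarrow>
        D l x = rho0 x \<otimes>\<^bsub>CB G\<^esub> finprod (CB G) (\<lambda>i. rho i (l ^ i) x) {1..DIM('v)}"
    using assms(3) unfolding dilation_components_def by blast+
  have r0c: "\<And>x. x \<in> carrier (CB G) \<Longrightarrow> rho0 x \<in> carrier (CB G)"
    using dc(1) unfolding continuous_map_def topspace_CBtop by blast
  have rc: "rho i t x \<in> carrier (CB G)"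
    if "i \<in> {1..DIM('v)}" "t \<ge> 0" "x \<in> carrier (CB G)" for i t x
  proof -
    have "(t, x) \<in> topspace (prod_topology (top_of_set {0..}) (CBtop G))"
      using that by (simp add: topspace_CBtop)
    then have "(\<lambda>(l, x). rho i l x) (t, x) \<in> topspace (CBtop G)"
      using dc(2)[OF that(1)] unfolding continuous_map_def by blast
    then show ?thesis by (simp add: topspace_CBtop)
  qed
  have Dh: "\<And>l. l \<ge> 0 \<Longrightarrow> D l \<in> hom (CB G) (CB G)"
    using assms(2) unfolding is_dilation_def by blast
  have Dc: "\<And>l m x. l \<ge> 0 \<Longrightarrow> m \<ge> 0 \<Longrightarrow> x \<in> carrier (CB G) \<Longrightarrow> D m (D l x) = D (m * l) x"
    using dil_comp[OF assms(1,2)] by blast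
  show ?thesis
    by (rule C.main_alg[OF r0c rc dc(3) dc(4) Dh Dc])
qed

end
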